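(* In the setting of ProxSARAH-AS applied to $\min_x F(x)=f(x)+r(x)$, $f=\frac1n\sum_{i=1}^nf_i$ (each $f_i$ differentiable, $\|\nabla f_i\|\le G_i$, $\nabla f_i$ $L_i$-Lipschitz, $r$ possibly non-convex non-smooth with existing proximal mapping, $F$ attaining its minimum $F(x^* )$, $\tilde L=\frac1n\sum_iL_i>0$), with a proper sampling of expected size $b$, a vector $v$ with $\mathbf P-pp^\top\preceq\mathrm{Diag}(p_1v_1,\dots,p_nv_n)$, $Q=\sum_{i=1}^n\frac{v_iL_i^2}{p_in^2}$, inner loop length $m$ and stepsize $\eta=\frac{1}{4\tilde L+2mQ/\tilde L}$: let $\epsilon>0$, $\Delta=F(\tilde x^1)-F(x^* )$, and take the number of epochs $\mathcal J=\frac{1}{m\epsilon^2}\big(24\tilde L+\frac{4mQ}{\tilde L}\big)\Delta$. If $x_R$ is drawn uniformly at random from $\{x_{t+1}^{(j)}:1\le t\le m,\ 1\le j\le\mathcal J\}$, then $E[\mathrm{dist}(0,\hat\partial F(x_R))]\le\epsilon$. Counting $n$ IFO calls for the full gradient of each epoch and $b$ IFO calls per inner iteration, the total number of IFO calls is $\frac{n+mb}{m\epsilon^2}\big(24\tilde L+\frac{4mQ}{\tilde L}\big)\Delta$.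
   Context: An IFO (incremental first-order oracle) call takes $x$ and $i\in[n]$ and returns $(f_i(x),\nabla f_i(x))$. $\mathrm{prox}_{\eta r}(y)=\arg\min_x\{\frac1{2\eta}\|x-y\|^2+r(x)\}$. A sampling is a random subset $S\subseteq[n]$ with $p_i=\mathrm{Prob}(i\in S)>0$, $\mathbf P_{ij}=\mathrm{Prob}(\{i,j\}\subseteq S)$, $E|S|=b$. ProxSARAH-AS: for $j=1,\dots,\mathcal J$: $x_0^{(j)}=\tilde x^{(j)}$, $\mathcal V_0^{(j)}=\frac1n\sum_i\nabla f_i(x_0^{(j)})$, $x_1^{(j)}=x_0^{(j)}$; for $t=1,\dots,m$: draw $S_t^{(j)}$ independently of the past, $\mathcal V_t^{(j)}=\sum_{i\in S_t^{(j)}}\frac1{np_i}(\nabla f_i(x_t^{(j)})-\nabla f_i(x_{t-1}^{(j)}))+\mathcal V_{t-1}^{(j)}$, $x_{t+1}^{(j)}\in\mathrm{prox}_{\eta r}(x_t^{(j)}-\eta\mathcal V_t^{(j)})$; then $\tilde x^{(j+1)}=x_{m+1}^{(j)}$. $\hat\partial F$ is the Fréchet subdifferential, $\hat\partial F(x)=\{v:\liminf_{\bar x\to x}\frac{F(\bar x)-F(x)-v^\top(\bar x-x)}{\|\bar x-x\|}\ge0\}$, and $\mathrm{dist}(0,A)=\inf_{v\in A}\|v\|$. *)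

theory Defs
  imports "HOL-Analysis.Analysis" "HOL-Probability.Probability"
begin

definition frechet_subdiff :: "('a::euclidean_space \<Rightarrow> real) \<Rightarrow> 'a \<Rightarrow> 'a set" where
  "frechet_subdiff F x =
     {v. Liminf (at x) (\<lambda>y. ereal ((F y - F x - inner v (y - x)) / norm (y - x))) \<ge> 0}"

(* dist(0, A) = inf_{v in A} |v|, valued in [0, +infinity] (infinite when A is empty) *)
definition dist0 :: "'a::real_normed_vector set \<Rightarrow> ennreal" where
  "dist0 A = (INF v\<in>A. ennreal (norm v))"

definition is_prox :: "real \<Rightarrow> ('a::real_normed_vector \<Rightarrow> real) \<Rightarrow> 'a \<Rightarrow> 'a \<Rightarrow> bool" where
  "is_prox eta r y x \<longleftrightarrow>
     (\<forall>z. 1 / (2 * eta) * (norm (x - y))\<^sup>2 + r x \<le> 1 / (2 * eta) * (norm (z - y))\<^sup>2 + r z)"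

definition full_grad :: "nat \<Rightarrow> (nat \<Rightarrow> 'a \<Rightarrow> 'a::real_vector) \<Rightarrow> 'a \<Rightarrow> 'a" where
  "full_grad n g x = (1 / real n) *\<^sub>R (\<Sum>i<n. g i x)"

(* Inner loop of one ProxSARAH-AS epoch started at x0 with samples s t (t = 1,2,...),
   proximal selection pr.  sarah_state ... t = (x_t, x_{t+1}, V_t). *)
fun sarah_state :: "nat \<Rightarrow> (nat \<Rightarrow> 'a \<Rightarrow> 'a::real_vector) \<Rightarrow> (nat \<Rightarrow> real) \<Rightarrow> real
      \<Rightarrow> ('a \<Rightarrow> 'a) \<Rightarrow> 'a \<Rightarrow> (nat \<Rightarrow> nat set) \<Rightarrow> nat \<Rightarrow> 'a \<times> 'a \<times> 'a" where
  "sarah_state n g p eta pr x0 s 0 = (x0, x0, full_grad n g x0)"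
| "sarah_state n g p eta pr x0 s (Suc t) =
     (case sarah_state n g p eta pr x0 s t of (xprev, xcur, V) \<Rightarrow>
        let V' = (\<Sum>i\<in>s (Suc t). (1 / (real n * p i)) *\<^sub>R (g i xcur - g i xprev)) + V
        in (xcur, pr (xcur - eta *\<^sub>R V'), V'))"

definition sarah_next :: "nat \<Rightarrow> (nat \<Rightarrow> 'a \<Rightarrow> 'a::real_vector) \<Rightarrow> (nat \<Rightarrow> real) \<Rightarrow> real
      \<Rightarrow> ('a \<Rightarrow> 'a) \<Rightarrow> 'a \<Rightarrow> (nat \<Rightarrow> nat set) \<Rightarrow> nat \<Rightarrow> 'a" where
  "sarah_next n g p eta pr x0 s t = fst (snd (sarah_state n g p eta pr x0 s t))"

(* epoch_start ... k = tilde x^{(k+1)}; omega (j, t) = S_t^{(j)} *)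
fun epoch_start :: "nat \<Rightarrow> (nat \<Rightarrow> 'a \<Rightarrow> 'a::real_vector) \<Rightarrow> (nat \<Rightarrow> real) \<Rightarrow> real
      \<Rightarrow> ('a \<Rightarrow> 'a) \<Rightarrow> nat \<Rightarrow> 'a \<Rightarrow> (nat \<times> nat \<Rightarrow> nat set) \<Rightarrow> nat \<Rightarrow> 'a" where
  "epoch_start n g p eta pr m x1 \<omega> 0 = x1"
| "epoch_start n g p eta pr m x1 \<omega> (Suc k) =
     sarah_next n g p eta pr (epoch_start n g p eta pr m x1 \<omega> k) (\<lambda>t. \<omega> (Suc k, t)) m"

definition proxsarah_iter :: "nat \<Rightarrow> (nat \<Rightarrow> 'a \<Rightarrow> 'a::real_vector) \<Rightarrow> (nat \<Rightarrow> real) \<Rightarrow> real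
      \<Rightarrow> ('a \<Rightarrow> 'a) \<Rightarrow> nat \<Rightarrow> 'a \<Rightarrow> (nat \<times> nat \<Rightarrow> nat set) \<Rightarrow> nat \<Rightarrow> nat \<Rightarrow> 'a" where
  "proxsarah_iter n g p eta pr m x1 \<omega> j t =
     sarah_next n g p eta pr (epoch_start n g p eta pr m x1 \<omega> (j - 1)) (\<lambda>t'. \<omega> (j, t')) t"

definition ifo_total :: "nat \<Rightarrow> nat \<Rightarrow> real \<Rightarrow> nat \<Rightarrow> real" where
  "ifo_total n m b J = real J * real n + real J * real m * b"

end

theory Submission
  imports Defs
begin


lemma poly_ineq:
  fixes L K y d :: real
  assumes L: "L > 0" and K: "K \<ge> 0"
  shows "(1/(24*L+4*K)) * (L*d + y)\<^sup>2 \<le>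
     (1/(4*L+2*K))/2 * y\<^sup>2 - L/2 * d\<^sup>2 + (1/(4*L+2*K)) * (d*(4*L+2*K) - y)\<^sup>2
       - (3/2) * (1/(4*L+2*K)) * (K*L) * d\<^sup>2"
proof -
  define u where "u = 4*L+2*K"
  define w where "w = 24*L+4*K"
  have u: "u > 0" and w: "w > 0" using L K by (auto simp: u_def w_def)
  define A where "A = 32*L+4*K"
  define B where "B = u*(w+L)"
  define C where "C = w*(u^2 - u*L/2 - (3/2)*K*L) - u*L^2"
  have A: "A > 0" using L K by (simp add: A_def)
  have ACB: "A*C - B^2 = 624*L^4+224*L^3*K+356*L^2*K^2+56*L*K^3"
    unfolding A_def B_def C_def u_def w_def by (simp add: algebra_simps power2_eq_square power3_eq_cube power4_eq_xxxx)
  have "A*C - B^2 \<ge> 0" unfolding ACB using L K by (intro add_nonneg_nonneg mult_nonneg_nonneg) auto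
  have q: "A*(A*y^2 - 2*B*y*d + C*d^2) = (A*y - B*d)^2 + (A*C - B^2)*d^2"
    by (simp add: algebra_simps power2_eq_square)
  have "A*(A*y^2 - 2*B*y*d + C*d^2) \<ge> 0" unfolding q using \<open>A*C - B^2 \<ge> 0\<close> by simp
  hence Q: "A*y^2 - 2*B*y*d + C*d^2 \<ge> 0" using A by (simp add: zero_le_mult_iff)
  have eq: "u*w*((1/u)/2 * y\<^sup>2 - L/2 * d\<^sup>2 + (1/u) * (d*u - y)\<^sup>2 - (3/2) * (1/u) * (K*L) * d\<^sup>2
        - (1/w) * (L*d + y)\<^sup>2) = A*y^2 - 2*B*y*d + C*d^2"
    using u w unfolding A_def B_def C_def
    by (simp add: field_simps power2_eq_square) (simp add: u_def w_def algebra_simps)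
  have "0 \<le> (1/u)/2 * y\<^sup>2 - L/2 * d\<^sup>2 + (1/u) * (d*u - y)\<^sup>2 - (3/2) * (1/u) * (K*L) * d\<^sup>2
        - (1/w) * (L*d + y)\<^sup>2"
    using Q eq u w by (metis mult_pos_pos zero_le_mult_iff not_less)
  thus ?thesis unfolding u_def w_def by simp
qed

locale psa =
  fixes n m J :: nat
    and f :: "nat \<Rightarrow> 'a::euclidean_space \<Rightarrow> real"
    and g :: "nat \<Rightarrow> 'a \<Rightarrow> 'a"
    and G L v :: "nat \<Rightarrow> real"
    and r :: "'a \<Rightarrow> real"
    and S :: "nat set pmf"
    and pr :: "'a \<Rightarrow> 'a"
    and xstar x1 :: 'a
    and \<epsilon> :: real
    and F :: "'a \<Rightarrow> real" and p :: "nat \<Rightarrow> real" and P :: "nat \<Rightarrow> nat \<Rightarrow> real"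
    and b Lt Q \<eta> \<Delta> :: real
  assumes F_def: "F = (\<lambda>x. (1 / real n) * (\<Sum>i<n. f i x) + r x)"
    and p_def: "p = (\<lambda>i. measure_pmf.prob S {A. i \<in> A})"
    and P_def: "P = (\<lambda>i j. measure_pmf.prob S {A. i \<in> A \<and> j \<in> A})"
    and b_def: "b = measure_pmf.expectation S (\<lambda>A. real (card A))"
    and Lt_def: "Lt = (1 / real n) * (\<Sum>i<n. L i)"
    and Q_def: "Q = (\<Sum>i<n. v i * (L i)\<^sup>2 / (p i * (real n)\<^sup>2))"
    and eta_def: "\<eta> = 1 / (4 * Lt + 2 * real m * Q / Lt)"
    and Delta_def: "\<Delta> = F x1 - F xstar"
    and n_pos: "n \<ge> 1"
    and grad: "\<And>i x. i < n \<Longrightarrow> GDERIV (f i) x :> g i x"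
    and grad_bdd: "\<And>i x. i < n \<Longrightarrow> norm (g i x) \<le> G i"
    and grad_lip: "\<And>i x y. i < n \<Longrightarrow> norm (g i x - g i y) \<le> L i * norm (x - y)"
    and Lt_pos: "Lt > 0"
    and minimum: "\<And>x. F xstar \<le> F x"
    and prox_exists: "\<And>y. \<exists>x. is_prox \<eta> r y x"
    and prox_sel: "\<And>y. is_prox \<eta> r y (pr y)"
    and sampling_subset: "set_pmf S \<subseteq> Pow {..<n}"
    and proper: "\<And>i. i < n \<Longrightarrow> p i > 0"
    and ESO: "\<And>h :: nat \<Rightarrow> real.
       (\<Sum>i<n. \<Sum>j<n. (P i j - p i * p j) * h i * h j) \<le> (\<Sum>i<n. p i * v i * (h i)\<^sup>2)"
    and m_pos: "m \<ge> 1"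
    and eps_pos: "\<epsilon> > 0"
    and J_pos: "J \<ge> 1"
    and J_def: "real J = 1 / (real m * \<epsilon>\<^sup>2) * (24 * Lt + 4 * real m * Q / Lt) * \<Delta>"
begin

definition "K = real m * Q / Lt"
definition "cc = 1 / (24 * Lt + 4 * K)"
definition "ce = 3 * \<eta> / 2"
definition "cd = real m * Q * ce"
definition "ff x = (1 / real n) * (\<Sum>i<n. f i x)"
definition "fg x = full_grad n g x"

lemma n_gt: "real n > 0" using n_pos by simp

lemma p_le1: "p i \<le> 1" unfolding p_def by simp

lemma P_diag: "P i i = p i" unfolding P_def p_def by simp

lemma v_nonneg: assumes "i < n" shows "v i \<ge> 0"
proof -
  have "(\<Sum>j<n. \<Sum>k<n. (P j k - p j * p k) * (if j = i then 1 else 0) * (if k = i then 1 else 0))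
     \<le> (\<Sum>j<n. p j * v j * (if j = i then 1 else 0)\<^sup>2)" by (rule ESO)
  also have "(\<Sum>j<n. \<Sum>k<n. (P j k - p j * p k) * (if j = i then 1 else 0) * (if k = i then 1 else 0))
      = (\<Sum>j<n. \<Sum>k<n. (if j = i then (if k = i then P i i - p i * p i else 0) else 0))"
    by (intro sum.cong) auto
  also have "\<dots> = (\<Sum>j<n. if j = i then P i i - p i * p i else 0)"
    by (intro sum.cong refl) (use assms in auto)
  also have "\<dots> = P i i - p i * p i"
    using assms by simp
  also have "(\<Sum>j<n. p j * v j * (if j = i then 1 else 0)\<^sup>2) = (\<Sum>j<n. if j = i then p i * v i else 0)"
    by (intro sum.cong refl) auto
  also have "\<dots> = p i * v i"
    using assms by simp
  finally have "p i * (1 - p i) \<le> p i * v i" by (simp add: P_diag algebra_simps)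
  hence "1 - p i \<le> v i" using proper[OF assms] by simp
  thus ?thesis using p_le1[of i] by simp
qed

lemma Q_nonneg: "Q \<ge> 0"
  unfolding Q_def using v_nonneg proper n_gt
  by (intro sum_nonneg divide_nonneg_pos mult_nonneg_nonneg) auto

lemma K_nonneg: "K \<ge> 0" unfolding K_def using Q_nonneg Lt_pos by simp

lemma eta_eq: "\<eta> = 1 / (4 * Lt + 2 * K)" unfolding eta_def K_def by simp

lemma eta_pos: "\<eta> > 0" unfolding eta_eq using K_nonneg Lt_pos by simp

lemma cc_pos: "cc > 0" unfolding cc_def using K_nonneg Lt_pos by simp

lemma F_eq: "F x = ff x + r x" unfolding F_def ff_def by simp

lemma ff_grad: "(ff has_derivative (\<lambda>h. inner h (fg x))) (at x)"
proof -
  have "((\<lambda>x. \<Sum>i<n. f i x) has_derivative (\<lambda>h. \<Sum>i<n. inner h (g i x))) (at x)"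
    by (rule has_derivative_sum) (use grad in \<open>auto simp: gderiv_def\<close>)
  hence "((\<lambda>x. (1 / real n) * (\<Sum>i<n. f i x)) has_derivative (\<lambda>h. (1 / real n) * (\<Sum>i<n. inner h (g i x)))) (at x)"
    by (rule has_derivative_mult_right)
  moreover have "(\<lambda>h. (1 / real n) * (\<Sum>i<n. inner h (g i x))) = (\<lambda>h. inner h (fg x))"
    by (auto simp: fun_eq_iff fg_def full_grad_def inner_sum_right)
  ultimately show ?thesis unfolding ff_def[abs_def] by simp
qed

lemma fg_lip: "norm (fg x - fg y) \<le> Lt * norm (x - y)"
proof -
  have "fg x - fg y = (1 / real n) *\<^sub>R (\<Sum>i<n. g i x - g i y)"
    by (simp add: fg_def full_grad_def sum_subtractf scaleR_diff_right)
  hence "norm (fg x - fg y) = (1 / real n) * norm (\<Sum>i<n. g i x - g i y)" by simp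
  also have "\<dots> \<le> (1 / real n) * (\<Sum>i<n. norm (g i x - g i y))"
    using n_gt by (intro mult_left_mono norm_sum) auto
  also have "\<dots> \<le> (1 / real n) * (\<Sum>i<n. L i * norm (x - y))"
    using n_gt by (intro mult_left_mono sum_mono grad_lip) auto
  also have "\<dots> = Lt * norm (x - y)" by (simp add: Lt_def sum_distrib_right)
  finally show ?thesis .
qed

lemma descent: "ff y \<le> ff x + inner (fg x) (y - x) + Lt / 2 * (norm (y - x))\<^sup>2"
proof -
  define d where "d = y - x"
  define phi where "phi s = ff (x + s *\<^sub>R d) - s * inner (fg x) d - Lt / 2 * s\<^sup>2 * (norm d)\<^sup>2" for s
  have D: "(phi has_real_derivative (inner d (fg (x + s *\<^sub>R d)) - inner (fg x) d - Lt * s * (norm d)\<^sup>2)) (at s)" for s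
  proof -
    have h1: "((\<lambda>s. x + s *\<^sub>R d) has_derivative (\<lambda>h. h *\<^sub>R d)) (at s)"
      by (auto intro!: derivative_eq_intros)
    have "((\<lambda>s. ff (x + s *\<^sub>R d)) has_derivative (\<lambda>h. inner (h *\<^sub>R d) (fg (x + s *\<^sub>R d)))) (at s)"
      using has_derivative_compose[OF h1 ff_grad] by simp
    moreover have "(\<lambda>h. inner (h *\<^sub>R d) (fg (x + s *\<^sub>R d))) = (*) (inner d (fg (x + s *\<^sub>R d)))"
      by (auto simp: fun_eq_iff)
    ultimately have "((\<lambda>s. ff (x + s *\<^sub>R d)) has_real_derivative (inner d (fg (x + s *\<^sub>R d)))) (at s)"
      by (simp add: has_field_derivative_def)
    then show ?thesis unfolding phi_def[abs_def]
      by (auto intro!: derivative_eq_intros)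
  qed
  have "phi 1 \<le> phi 0"
  proof (rule DERIV_nonpos_imp_nonincreasing[of 0 1 phi])
    fix s :: real assume s0: "0 \<le> s" and s1: "s \<le> 1"
    note s = s0 s1
    have "inner d (fg (x + s *\<^sub>R d)) - inner (fg x) d = inner d (fg (x + s *\<^sub>R d) - fg x)"
      by (simp add: inner_diff_right inner_commute)
    also have "\<dots> \<le> norm d * norm (fg (x + s *\<^sub>R d) - fg x)" by (rule norm_cauchy_schwarz)
    also have "\<dots> \<le> norm d * (Lt * norm (s *\<^sub>R d))"
      using fg_lip[of "x + s *\<^sub>R d" x] by (intro mult_left_mono) auto
    also have "\<dots> = Lt * s * (norm d)\<^sup>2" using s by (simp add: power2_eq_square)
    finally show "\<exists>y. (phi has_real_derivative y) (at s) \<and> y \<le> 0"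
      using D[of s] by (intro exI[of _ "inner d (fg (x + s *\<^sub>R d)) - inner (fg x) d - Lt * s * (norm d)\<^sup>2"]) auto
  qed simp
  thus ?thesis unfolding phi_def d_def by (simp add: algebra_simps)
qed

end



lemma frechet_mem:
  fixes F0 r :: "'a::euclidean_space \<Rightarrow> real" and xp z gp :: 'a and eta :: real
  assumes eta: "eta > 0"
    and der: "(F0 has_derivative (\<lambda>h. inner h gp)) (at xp)"
    and prox: "\<And>y. 1/(2*eta)*(norm(xp - z))\<^sup>2 + r xp \<le> 1/(2*eta)*(norm(y - z))\<^sup>2 + r y"
  shows "gp - (1/eta) *\<^sub>R (xp - z) \<in> frechet_subdiff (\<lambda>x. F0 x + r x) xp"
proof -
  define v where "v = gp - (1/eta) *\<^sub>R (xp - z)"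
  have lim: "((\<lambda>y. norm ((F0 y - F0 xp) - inner (y - xp) gp) / norm (y - xp)) \<longlongrightarrow> 0) (at xp)"
    using der by (simp add: has_derivative_iff_norm)
  have "0 \<le> Liminf (at xp) (\<lambda>y. ereal ((F0 y + r y - (F0 xp + r xp) - inner v (y - xp)) / norm (y - xp)))"
  proof (subst le_Liminf_iff, intro allI impI)
    fix c :: ereal assume c: "c < 0"
    show "\<forall>\<^sub>F y in at xp. c < ereal ((F0 y + r y - (F0 xp + r xp) - inner v (y - xp)) / norm (y - xp))"
    proof (cases c)
      case (real c')
      with c have c': "c' < 0" by simp
      define e where "e = - c' / 2"
      have e: "e > 0" using c' by (simp add: e_def)
      have ev1: "\<forall>\<^sub>F y in at xp. norm ((F0 y - F0 xp) - inner (y - xp) gp) / norm (y - xp) < e"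
        using order_tendstoD(2)[OF lim e] .
      have ev2: "\<forall>\<^sub>F y in at xp. y \<noteq> xp \<and> norm (y - xp) < 2 * eta * e"
        unfolding eventually_at using e eta by (intro exI[of _ "2 * eta * e"]) (auto simp: dist_norm)
      show ?thesis using ev1 ev2
      proof eventually_elim
        case (elim y)
        define h where "h = y - xp"
        have hpos: "norm h > 0" using elim by (simp add: h_def)
        have yz: "y - z = h + (xp - z)" by (simp add: h_def)
        have "(norm (h + (xp - z)))\<^sup>2 = (norm h)\<^sup>2 + 2 * inner h (xp - z) + (norm (xp - z))\<^sup>2"
          by (simp add: power2_norm_eq_inner inner_add_left inner_add_right inner_diff_left inner_diff_right inner_commute algebra_simps)
        hence "(norm (y - z))\<^sup>2 = (norm h)\<^sup>2 + 2 * inner h (xp - z) + (norm (xp - z))\<^sup>2"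
          by (simp only: yz)
        hence sq2: "1/(2*eta) * (norm (y - z))\<^sup>2 = 1/(2*eta) * (norm h)\<^sup>2 + 1/(2*eta) * (2 * inner h (xp - z)) + 1/(2*eta) * (norm (xp - z))\<^sup>2"
          by (simp only: distrib_left)
        have "r xp - r y \<le> 1/(2*eta) * (norm h)\<^sup>2 + 1/(2*eta) * (2 * inner h (xp - z))"
          using prox[of y] unfolding sq2 by linarith
        moreover have "inner ((1/eta) *\<^sub>R (xp - z)) h = 2 * (1/(2*eta) * inner h (xp - z))"
          by (simp add: inner_commute)
        moreover have "- (norm h)\<^sup>2 / (2 * eta) = - (1/(2*eta) * (norm h)\<^sup>2)" by simp
        ultimately have rr: "r y - r xp + inner ((1/eta) *\<^sub>R (xp - z)) h \<ge> - (norm h)\<^sup>2 / (2 * eta)"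
          by linarith
        have ff: "F0 y - F0 xp - inner h gp \<ge> - norm ((F0 y - F0 xp) - inner h gp)" by simp
        have num: "F0 y + r y - (F0 xp + r xp) - inner v (y - xp)
            = (F0 y - F0 xp - inner h gp) + (r y - r xp + inner ((1/eta) *\<^sub>R (xp - z)) h)"
          by (simp add: v_def h_def inner_diff_left inner_diff_right inner_commute algebra_simps)
        have N: "norm ((F0 y - F0 xp) - inner h gp) < e * norm h"
          using elim hpos by (simp add: h_def divide_less_eq)
        have H: "(norm h)\<^sup>2 / (2 * eta) < e * norm h"
          using elim hpos eta by (simp add: h_def power2_eq_square field_simps)
        have "F0 y + r y - (F0 xp + r xp) - inner v (y - xp) > c' * norm h"
          unfolding num using rr ff N H by (simp add: e_def)
        hence "c' < (F0 y + r y - (F0 xp + r xp) - inner v (y - xp)) / norm h"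
          using hpos by (simp add: less_divide_eq mult.commute)
        thus ?case by (simp add: real h_def)
      qed
    next
      case PInf with c show ?thesis by simp
    next
      case MInf show ?thesis by (simp add: MInf)
    qed
  qed
  thus ?thesis unfolding frechet_subdiff_def v_def by simp
qed

lemma dist0_le: "v \<in> A \<Longrightarrow> dist0 A \<le> ennreal (norm v)"
  unfolding dist0_def by (rule INF_lower)

context psa begin

lemma F_fun: "F = (\<lambda>x. ff x + r x)" using F_eq by auto

lemma dist_step:
  "dist0 (frechet_subdiff F (pr (x - \<eta> *\<^sub>R V)))
     \<le> ennreal (norm (fg (pr (x - \<eta> *\<^sub>R V)) - (1/\<eta>) *\<^sub>R (pr (x - \<eta> *\<^sub>R V) - (x - \<eta> *\<^sub>R V))))"
proof (rule dist0_le)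
  have "\<And>y. 1/(2*\<eta>)*(norm(pr (x - \<eta> *\<^sub>R V) - (x - \<eta> *\<^sub>R V)))\<^sup>2 + r (pr (x - \<eta> *\<^sub>R V))
      \<le> 1/(2*\<eta>)*(norm(y - (x - \<eta> *\<^sub>R V)))\<^sup>2 + r y"
    using prox_sel[of "x - \<eta> *\<^sub>R V"] unfolding is_prox_def by blast
  from frechet_mem[OF eta_pos ff_grad this]
  show "fg (pr (x - \<eta> *\<^sub>R V)) - (1/\<eta>) *\<^sub>R (pr (x - \<eta> *\<^sub>R V) - (x - \<eta> *\<^sub>R V))
      \<in> frechet_subdiff F (pr (x - \<eta> *\<^sub>R V))" unfolding F_fun .
qed

lemma det_step:
  fixes x V :: 'a
  defines "xp \<equiv> pr (x - \<eta> *\<^sub>R V)"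
  shows "cc * (norm (fg xp - (1/\<eta>) *\<^sub>R (xp - (x - \<eta> *\<^sub>R V))))\<^sup>2
     \<le> F x - F xp + ce * (norm (fg x - V))\<^sup>2 - cd * (norm (xp - x))\<^sup>2"
proof -
  define z where "z = x - \<eta> *\<^sub>R V"
  define d where "d = xp - x"
  define e where "e = fg x - V"
  define u where "u = (1/\<eta>) *\<^sub>R d - e"
  define y where "y = norm u"
  define dd where "dd = norm d"
  define ee where "ee = norm e"
  have eta: "\<eta> > 0" by (rule eta_pos)
  have prox: "1/(2*\<eta>)*(norm(xp - z))\<^sup>2 + r xp \<le> 1/(2*\<eta>)*(norm(x - z))\<^sup>2 + r x"
    using prox_sel[of z] unfolding is_prox_def xp_def z_def by blast
  have xz: "x - z = \<eta> *\<^sub>R V" by (simp add: z_def)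
  have xpz: "xp - z = d + \<eta> *\<^sub>R V" by (simp add: z_def d_def)
  have n1: "(norm (d + \<eta> *\<^sub>R V))\<^sup>2 = dd\<^sup>2 + 2 * \<eta> * inner d V + (norm (\<eta> *\<^sub>R V))\<^sup>2"
    unfolding dd_def power2_norm_eq_inner by (simp add: inner_add_left inner_add_right inner_commute algebra_simps)
  have rr: "r xp \<le> r x - dd\<^sup>2 / (2*\<eta>) - inner d V"
  proof -
    have "1/(2*\<eta>)*(dd\<^sup>2 + 2 * \<eta> * inner d V + (norm (\<eta> *\<^sub>R V))\<^sup>2) + r xp
        \<le> 1/(2*\<eta>)*(norm(\<eta> *\<^sub>R V))\<^sup>2 + r x"
      using prox unfolding xz xpz n1 .
    moreover have "1/(2*\<eta>)*(dd\<^sup>2 + 2 * \<eta> * inner d V + (norm (\<eta> *\<^sub>R V))\<^sup>2)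
        = dd\<^sup>2 / (2*\<eta>) + inner d V + 1/(2*\<eta>)*(norm (\<eta> *\<^sub>R V))\<^sup>2"
      using eta by (simp add: field_simps)
    ultimately show ?thesis by linarith
  qed
  have ffd: "ff xp \<le> ff x + inner (fg x) d + Lt / 2 * dd\<^sup>2"
    using descent[of xp x] by (simp add: d_def dd_def)
  have I0: "F xp \<le> F x + inner e d - dd\<^sup>2 / (2*\<eta>) + Lt / 2 * dd\<^sup>2"
    using rr ffd unfolding F_eq e_def by (simp add: inner_diff_right inner_commute)
  have y2: "y\<^sup>2 = (1/\<eta>)\<^sup>2 * dd\<^sup>2 - 2 * (1/\<eta>) * inner e d + ee\<^sup>2"
    unfolding y_def u_def dd_def ee_def power2_norm_eq_inner
    by (simp add: inner_diff_left inner_diff_right inner_commute algebra_simps power2_eq_square)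
  have ed: "inner e d = dd\<^sup>2 / (2*\<eta>) + \<eta>/2 * ee\<^sup>2 - \<eta>/2 * y\<^sup>2"
    unfolding y2 using eta by (simp add: field_simps power2_eq_square)
  have I: "F x - F xp \<ge> \<eta>/2 * y\<^sup>2 - \<eta>/2 * ee\<^sup>2 - Lt/2 * dd\<^sup>2"
    using I0 unfolding ed by linarith
  have w: "fg xp - (1/\<eta>) *\<^sub>R (xp - z) = (fg xp - fg x) - u"
    using eta unfolding xpz u_def e_def by (simp add: algebra_simps)
  have "norm (fg xp - (1/\<eta>) *\<^sub>R (xp - z)) \<le> norm (fg xp - fg x) + y"
    unfolding w y_def by (rule norm_triangle_ineq4)
  also have "\<dots> \<le> Lt * dd + y" using fg_lip[of xp x] by (simp add: dd_def d_def)
  finally have II: "norm (fg xp - (1/\<eta>) *\<^sub>R (xp - z)) \<le> Lt * dd + y" .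
  hence II2: "(norm (fg xp - (1/\<eta>) *\<^sub>R (xp - z)))\<^sup>2 \<le> (Lt * dd + y)\<^sup>2"
    by (intro power_mono) auto
  have "\<bar>norm ((1/\<eta>) *\<^sub>R d) - norm u\<bar> \<le> norm ((1/\<eta>) *\<^sub>R d - u)" by (rule norm_triangle_ineq3)
  hence "\<bar>dd / \<eta> - y\<bar> \<le> ee" using eta by (simp add: u_def y_def dd_def ee_def)
  hence III: "(dd / \<eta> - y)\<^sup>2 \<le> ee\<^sup>2"
    by (metis abs_le_square_iff abs_of_nonneg ee_def norm_ge_zero)
  have P: "cc * (Lt*dd + y)\<^sup>2 \<le>
     \<eta>/2 * y\<^sup>2 - Lt/2 * dd\<^sup>2 + \<eta> * (dd/\<eta> - y)\<^sup>2 - cd * dd\<^sup>2"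
  proof -
    have h1: "dd * (4*Lt + 2*K) = dd / \<eta>" unfolding eta_eq by simp
    have cdq: "cd = (3/2) * \<eta> * (K*Lt)"
      unfolding cd_def ce_def K_def using Lt_pos by simp
    have PI: "cc*(Lt*dd+y)\<^sup>2 \<le> \<eta>/2*y\<^sup>2 - Lt/2*dd\<^sup>2 + \<eta>*(dd/\<eta> - y)\<^sup>2 - (3/2)*\<eta>*(K*Lt)*dd\<^sup>2"
      using poly_ineq[OF Lt_pos K_nonneg, of dd y] unfolding eta_eq[symmetric] h1 cc_def[symmetric] .
    show ?thesis using PI unfolding cdq .
  qed
  have "cc * (norm (fg xp - (1/\<eta>) *\<^sub>R (xp - z)))\<^sup>2 \<le> cc * (Lt*dd + y)\<^sup>2"
    using II2 cc_pos by simp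
  also have "\<dots> \<le> \<eta>/2 * y\<^sup>2 - Lt/2 * dd\<^sup>2 + \<eta> * ee\<^sup>2 - cd * dd\<^sup>2"
    using P III eta by (smt (verit) mult_left_mono)
  also have "\<dots> \<le> F x - F xp + ce * ee\<^sup>2 - cd * dd\<^sup>2"
    using I unfolding ce_def by linarith
  finally show ?thesis unfolding z_def ee_def e_def dd_def d_def .
qed

end



context psa begin

lemma ESO_vec:
  fixes w :: "nat \<Rightarrow> 'a"
  shows "(\<Sum>i<n. \<Sum>j<n. (P i j - p i * p j) * inner (w i) (w j)) \<le> (\<Sum>i<n. p i * v i * (norm (w i))\<^sup>2)"
proof -
  have "(\<Sum>i<n. \<Sum>j<n. (P i j - p i * p j) * inner (w i) (w j))
      = (\<Sum>i<n. \<Sum>j<n. \<Sum>k\<in>Basis. (P i j - p i * p j) * inner (w i) k * inner (w j) k)"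
    by (intro sum.cong refl) (subst euclidean_inner, simp add: sum_distrib_left mult.assoc)
  also have "\<dots> = (\<Sum>i<n. \<Sum>k\<in>Basis. \<Sum>j<n. (P i j - p i * p j) * inner (w i) k * inner (w j) k)"
    by (intro sum.cong refl sum.swap)
  also have "\<dots> = (\<Sum>k\<in>Basis. \<Sum>i<n. \<Sum>j<n. (P i j - p i * p j) * inner (w i) k * inner (w j) k)"
    by (rule sum.swap)
  also have "\<dots> \<le> (\<Sum>k\<in>Basis. \<Sum>i<n. p i * v i * (inner (w i) k)\<^sup>2)"
    by (intro sum_mono ESO)
  also have "\<dots> = (\<Sum>i<n. \<Sum>k\<in>Basis. p i * v i * (inner (w i) k)\<^sup>2)"
    by (rule sum.swap)
  also have "\<dots> = (\<Sum>i<n. p i * v i * (norm (w i))\<^sup>2)"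
  proof (intro sum.cong refl)
    fix i
    have "(norm (w i))\<^sup>2 = (\<Sum>k\<in>Basis. (inner (w i) k)\<^sup>2)"
      by (subst power2_norm_eq_inner, subst euclidean_inner, simp add: power2_eq_square)
    thus "(\<Sum>k\<in>Basis. p i * v i * (inner (w i) k)\<^sup>2) = p i * v i * (norm (w i))\<^sup>2"
      by (simp add: sum_distrib_left)
  qed
  finally show ?thesis .
qed

lemma finS: "finite (set_pmf S)"
  by (rule finite_subset[OF sampling_subset]) simp

lemma intS: "integrable (measure_pmf S) (h :: nat set \<Rightarrow> real)"
  by (rule integrable_measure_pmf_finite[OF finS])

lemma E_ind: "measure_pmf.expectation S (\<lambda>A. if i \<in> A then 1 else 0) = p i"
proof -
  have "(\<lambda>A. if i \<in> A then 1 else (0::real)) = indicator {A. i \<in> A}" by (auto simp: fun_eq_iff)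
  thus ?thesis by (simp add: p_def)
qed

lemma E_ind2: "measure_pmf.expectation S (\<lambda>A. (if i \<in> A then 1 else 0) * (if j \<in> A then 1 else 0)) = P i j"
proof -
  have "(\<lambda>A. (if i \<in> A then 1 else 0) * (if j \<in> A then 1 else (0::real))) = indicator {A. i \<in> A \<and> j \<in> A}"
    by (auto simp: fun_eq_iff)
  thus ?thesis by (simp add: P_def)
qed

lemma var_step:
  fixes x xp e :: 'a
  shows "measure_pmf.expectation S
     (\<lambda>A. (norm (e + (fg xp - fg x) - (\<Sum>i\<in>A. (1 / (real n * p i)) *\<^sub>R (g i xp - g i x))))\<^sup>2)
     \<le> (norm e)\<^sup>2 + Q * (norm (xp - x))\<^sup>2"
proof -
  define w where "w i = (1 / (real n * p i)) *\<^sub>R (g i xp - g i x)" for i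
  define \<delta> where "\<delta> = fg xp - fg x"
  define u where "u = e + \<delta>"
  have \<delta>_eq: "\<delta> = (\<Sum>i<n. p i *\<^sub>R w i)"
  proof -
    have "(\<Sum>i<n. p i *\<^sub>R w i) = (\<Sum>i<n. (1 / real n) *\<^sub>R (g i xp - g i x))"
    proof (intro sum.cong refl)
      fix i assume "i \<in> {..<n}"
      hence "p i > 0" using proper by simp
      thus "p i *\<^sub>R w i = (1 / real n) *\<^sub>R (g i xp - g i x)" using n_gt by (simp add: w_def)
    qed
    thus ?thesis by (simp add: \<delta>_def fg_def full_grad_def sum_subtractf scaleR_diff_right scaleR_sum_right)
  qed
  define I where "I A i = (if i \<in> A then 1 else (0::real))" for A :: "nat set" and i :: nat
  have pw: "(norm (u - (\<Sum>i\<in>A. w i)))\<^sup>2 =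
      (norm u)\<^sup>2 - 2 * (\<Sum>i<n. I A i * inner u (w i)) + (\<Sum>i<n. \<Sum>j<n. (I A i * I A j) * inner (w i) (w j))"
    if A: "A \<in> set_pmf S" for A
  proof -
    have As: "A \<subseteq> {..<n}" using A sampling_subset by auto
    have "(\<Sum>i<n. I A i *\<^sub>R w i) = (\<Sum>i<n. if i \<in> A then w i else 0)"
      by (intro sum.cong refl) (simp add: I_def)
    also have "\<dots> = sum w ({..<n} \<inter> A)" by (simp add: sum.inter_restrict)
    also have "\<dots> = sum w A" using As by (simp add: Int_absorb1)
    finally have s1: "(\<Sum>i\<in>A. w i) = (\<Sum>i<n. I A i *\<^sub>R w i)" by simp
    have "(norm (u - (\<Sum>i\<in>A. w i)))\<^sup>2 = (norm u)\<^sup>2 - 2 * inner u (\<Sum>i\<in>A. w i) + inner (\<Sum>i\<in>A. w i) (\<Sum>i\<in>A. w i)"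
      by (simp add: power2_norm_eq_inner inner_diff_left inner_diff_right inner_commute)
    also have "\<dots> = (norm u)\<^sup>2 - 2 * (\<Sum>i<n. I A i * inner u (w i)) + (\<Sum>i<n. \<Sum>j<n. (I A i * I A j) * inner (w i) (w j))"
      unfolding s1 by (simp add: inner_sum_left inner_sum_right sum_distrib_left mult.assoc mult.left_commute inner_commute)
    finally show ?thesis .
  qed
  have "measure_pmf.expectation S (\<lambda>A. (norm (e + (fg xp - fg x) - (\<Sum>i\<in>A. (1 / (real n * p i)) *\<^sub>R (g i xp - g i x))))\<^sup>2)
      = measure_pmf.expectation S (\<lambda>A. (norm u)\<^sup>2 - 2 * (\<Sum>i<n. I A i * inner u (w i)) + (\<Sum>i<n. \<Sum>j<n. (I A i * I A j) * inner (w i) (w j)))"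
    using pw unfolding u_def \<delta>_def w_def
    by (intro integral_cong_AE) (auto simp: AE_measure_pmf_iff)
  also have "\<dots> = (norm u)\<^sup>2 - 2 * (\<Sum>i<n. p i * inner u (w i)) + (\<Sum>i<n. \<Sum>j<n. P i j * inner (w i) (w j))"
  proof -
    have EI: "measure_pmf.expectation S (\<lambda>A. I A i) = p i" for i
      using E_ind[of i] unfolding I_def .
    have EI2: "measure_pmf.expectation S (\<lambda>A. I A i * I A j) = P i j" for i j
      using E_ind2[of i j] unfolding I_def .
    have e1: "measure_pmf.expectation S (\<lambda>A. \<Sum>i<n. I A i * inner u (w i)) = (\<Sum>i<n. p i * inner u (w i))"
    proof -
      have "measure_pmf.expectation S (\<lambda>A. \<Sum>i<n. I A i * inner u (w i)) = (\<Sum>i<n. measure_pmf.expectation S (\<lambda>A. I A i * inner u (w i)))"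
        by (rule Bochner_Integration.integral_sum) (rule intS)
      also have "\<dots> = (\<Sum>i<n. p i * inner u (w i))"
        by (intro sum.cong refl) (simp add: EI)
      finally show ?thesis .
    qed
    have e2: "measure_pmf.expectation S (\<lambda>A. \<Sum>i<n. \<Sum>j<n. (I A i * I A j) * inner (w i) (w j))
        = (\<Sum>i<n. \<Sum>j<n. P i j * inner (w i) (w j))"
    proof -
      have "measure_pmf.expectation S (\<lambda>A. \<Sum>i<n. \<Sum>j<n. (I A i * I A j) * inner (w i) (w j))
          = (\<Sum>i<n. measure_pmf.expectation S (\<lambda>A. \<Sum>j<n. (I A i * I A j) * inner (w i) (w j)))"
        by (rule Bochner_Integration.integral_sum) (rule intS)
      also have "\<dots> = (\<Sum>i<n. \<Sum>j<n. measure_pmf.expectation S (\<lambda>A. (I A i * I A j) * inner (w i) (w j)))"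
        by (intro sum.cong refl Bochner_Integration.integral_sum intS)
      also have "\<dots> = (\<Sum>i<n. \<Sum>j<n. P i j * inner (w i) (w j))"
        by (intro sum.cong refl) (simp add: EI2)
      finally show ?thesis .
    qed
    have "measure_pmf.expectation S (\<lambda>A. (norm u)\<^sup>2 - 2 * (\<Sum>i<n. I A i * inner u (w i)) + (\<Sum>i<n. \<Sum>j<n. (I A i * I A j) * inner (w i) (w j)))
      = (norm u)\<^sup>2 - 2 * measure_pmf.expectation S (\<lambda>A. \<Sum>i<n. I A i * inner u (w i))
         + measure_pmf.expectation S (\<lambda>A. \<Sum>i<n. \<Sum>j<n. (I A i * I A j) * inner (w i) (w j))"
      by (subst Bochner_Integration.integral_add, rule intS, rule intS, subst Bochner_Integration.integral_diff, rule intS, rule intS) simp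
    thus ?thesis unfolding e1 e2 .
  qed
  also have "\<dots> = (norm e)\<^sup>2 + (\<Sum>i<n. \<Sum>j<n. (P i j - p i * p j) * inner (w i) (w j))"
  proof -
    have "(\<Sum>i<n. p i * inner u (w i)) = inner u \<delta>"
      by (simp add: \<delta>_eq inner_sum_right)
    moreover have "(\<Sum>i<n. \<Sum>j<n. (p i * p j) * inner (w i) (w j)) = inner \<delta> \<delta>"
      by (simp only: \<delta>_eq inner_sum_left inner_sum_right inner_scaleR_left inner_scaleR_right sum_distrib_left mult.assoc, intro sum.cong refl, simp add: inner_commute)
    moreover have "(norm u)\<^sup>2 - 2 * inner u \<delta> + inner \<delta> \<delta> = (norm e)\<^sup>2"
      by (simp add: u_def power2_norm_eq_inner inner_add_left inner_add_right inner_commute)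
    ultimately show ?thesis
      by (simp add: left_diff_distrib sum_subtractf)
  qed
  also have "\<dots> \<le> (norm e)\<^sup>2 + (\<Sum>i<n. p i * v i * (norm (w i))\<^sup>2)"
    using ESO_vec[of w] by simp
  also have "(\<Sum>i<n. p i * v i * (norm (w i))\<^sup>2) \<le> (\<Sum>i<n. v i * (L i)\<^sup>2 / (p i * (real n)\<^sup>2) * (norm (xp - x))\<^sup>2)"
  proof (intro sum_mono)
    fix i assume i: "i \<in> {..<n}"
    have pi: "p i > 0" using proper i by simp
    have nw: "norm (w i) = (1/(real n * p i)) * norm (g i xp - g i x)"
      unfolding w_def norm_scaleR using pi n_gt by simp
    have "p i * v i * (norm (w i))\<^sup>2 = v i * (norm (g i xp - g i x))\<^sup>2 / (p i * (real n)\<^sup>2)"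
      unfolding nw using pi n_gt by (simp add: power2_eq_square field_simps)
    also have "\<dots> \<le> v i * (L i * norm (xp - x))\<^sup>2 / (p i * (real n)\<^sup>2)"
      using pi n_gt v_nonneg[of i] i grad_lip[of i xp x]
      by (intro divide_right_mono mult_left_mono power_mono) auto
    finally show "p i * v i * (norm (w i))\<^sup>2 \<le> v i * (L i)\<^sup>2 / (p i * (real n)\<^sup>2) * (norm (xp - x))\<^sup>2"
      by (simp add: power_mult_distrib)
  qed
  also have "(\<Sum>i<n. v i * (L i)\<^sup>2 / (p i * (real n)\<^sup>2) * (norm (xp - x))\<^sup>2) = Q * (norm (xp - x))\<^sup>2"
    by (simp add: Q_def sum_distrib_right)
  finally show ?thesis by simp
qed

end



lemma resample:
  fixes h :: "('k \<Rightarrow> 'b) \<Rightarrow> ennreal"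
  assumes D: "finite D" and k: "k \<in> D"
  shows "(\<integral>\<^sup>+om. h om \<partial>measure_pmf (Pi_pmf D d q))
       = (\<integral>\<^sup>+om. (\<integral>\<^sup>+y. h (om(k := y)) \<partial>measure_pmf (q k)) \<partial>measure_pmf (Pi_pmf D d q))"
proof -
  define D' where "D' = D - {k}"
  have DD: "D = insert k D'" and fin: "finite D'" and kn: "k \<notin> D'" using D k by (auto simp: D'_def)
  have ins: "Pi_pmf D d q = map_pmf (\<lambda>(y,f). f(k:=y)) (pair_pmf (q k) (Pi_pmf D' d q))"
    unfolding DD by (rule Pi_pmf_insert[OF fin kn])
  have swap: "(\<integral>\<^sup>+y. \<integral>\<^sup>+f. G y f \<partial>measure_pmf (Pi_pmf D' d q) \<partial>measure_pmf (q k))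
      = (\<integral>\<^sup>+f. \<integral>\<^sup>+y. G y f \<partial>measure_pmf (q k) \<partial>measure_pmf (Pi_pmf D' d q))" for G :: "'b \<Rightarrow> ('k \<Rightarrow> 'b) \<Rightarrow> ennreal"
  proof -
    have "(\<integral>\<^sup>+y. \<integral>\<^sup>+f. G y f \<partial>measure_pmf (Pi_pmf D' d q) \<partial>measure_pmf (q k))
        = (\<integral>\<^sup>+x. case_prod G x \<partial>measure_pmf (pair_pmf (q k) (Pi_pmf D' d q)))"
      by (simp add: nn_integral_pair_pmf')
    also have "\<dots> = (\<integral>\<^sup>+x. case_prod G x \<partial>measure_pmf (map_pmf (\<lambda>(x, y). (y, x)) (pair_pmf (Pi_pmf D' d q) (q k))))"
      by (subst pair_commute_pmf) (rule refl)
    also have "\<dots> = (\<integral>\<^sup>+f. \<integral>\<^sup>+y. G y f \<partial>measure_pmf (q k) \<partial>measure_pmf (Pi_pmf D' d q))"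
      by (simp add: nn_integral_pair_pmf' case_prod_beta)
    finally show ?thesis .
  qed
  have "(\<integral>\<^sup>+om. h om \<partial>measure_pmf (Pi_pmf D d q))
      = (\<integral>\<^sup>+y. \<integral>\<^sup>+f. h (f(k:=y)) \<partial>measure_pmf (Pi_pmf D' d q) \<partial>measure_pmf (q k))"
    unfolding ins by (simp add: nn_integral_pair_pmf' case_prod_beta)
  also have "\<dots> = (\<integral>\<^sup>+f. \<integral>\<^sup>+y. h (f(k:=y)) \<partial>measure_pmf (q k) \<partial>measure_pmf (Pi_pmf D' d q))"
    by (rule swap)
  also have "\<dots> = (\<integral>\<^sup>+y. \<integral>\<^sup>+f. \<integral>\<^sup>+z. h (f(k:=z)) \<partial>measure_pmf (q k) \<partial>measure_pmf (Pi_pmf D' d q) \<partial>measure_pmf (q k))"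
    by (simp add: measure_pmf.emeasure_space_1)
  also have "\<dots> = (\<integral>\<^sup>+y. \<integral>\<^sup>+f. \<integral>\<^sup>+z. h ((f(k:=y))(k:=z)) \<partial>measure_pmf (q k) \<partial>measure_pmf (Pi_pmf D' d q) \<partial>measure_pmf (q k))"
    by simp
  also have "\<dots> = (\<integral>\<^sup>+om. (\<integral>\<^sup>+y. h (om(k := y)) \<partial>measure_pmf (q k)) \<partial>measure_pmf (Pi_pmf D d q))"
    unfolding ins by (simp add: nn_integral_pair_pmf' case_prod_beta)
  finally show ?thesis .
qed

lemma sarah_state_Suc_eq:
  "sarah_state n g p eta pr x0 s (Suc t) =
     (fst (snd (sarah_state n g p eta pr x0 s t)),
      pr (fst (snd (sarah_state n g p eta pr x0 s t)) - eta *\<^sub>R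
         ((\<Sum>i\<in>s (Suc t). (1 / (real n * p i)) *\<^sub>R (g i (fst (snd (sarah_state n g p eta pr x0 s t)))
              - g i (fst (sarah_state n g p eta pr x0 s t)))) + snd (snd (sarah_state n g p eta pr x0 s t)))),
      (\<Sum>i\<in>s (Suc t). (1 / (real n * p i)) *\<^sub>R (g i (fst (snd (sarah_state n g p eta pr x0 s t)))
              - g i (fst (sarah_state n g p eta pr x0 s t)))) + snd (snd (sarah_state n g p eta pr x0 s t)))"
  by (simp add: split_beta Let_def)

lemma sarah_state_indep:
  "(\<And>t'. 1 \<le> t' \<Longrightarrow> t' \<le> t \<Longrightarrow> s t' = s' t') \<Longrightarrow>
     sarah_state n g p eta pr x0 s t = sarah_state n g p eta pr x0 s' t"
proof (induction t)
  case 0 show ?case by simp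
next
  case (Suc t)
  have "sarah_state n g p eta pr x0 s t = sarah_state n g p eta pr x0 s' t"
    using Suc.prems by (intro Suc.IH) auto
  moreover have "s (Suc t) = s' (Suc t)" using Suc.prems by auto
  ultimately show ?case by (simp only: sarah_state_Suc_eq)
qed

lemma epoch_start_indep:
  "(\<And>j t. 1 \<le> j \<Longrightarrow> j \<le> k \<Longrightarrow> 1 \<le> t \<Longrightarrow> t \<le> m \<Longrightarrow> om (j, t) = om' (j, t)) \<Longrightarrow>
     epoch_start n g p eta pr m x1 om k = epoch_start n g p eta pr m x1 om' k"
proof (induction k)
  case 0 show ?case by simp
next
  case (Suc k)
  have "epoch_start n g p eta pr m x1 om k = epoch_start n g p eta pr m x1 om' k"
    using Suc.prems by (intro Suc.IH) auto
  moreover have "sarah_state n g p eta pr x0 (\<lambda>t. om (Suc k, t)) m = sarah_state n g p eta pr x0 (\<lambda>t. om' (Suc k, t)) m" for x0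
    using Suc.prems by (intro sarah_state_indep) auto
  ultimately show ?case by (simp add: sarah_next_def)
qed

lemma sarah_next_Suc: "sarah_next n g p eta pr x0 s t = fst (sarah_state n g p eta pr x0 s (Suc t))"
  unfolding sarah_next_def by (simp only: sarah_state_Suc_eq fst_conv)

lemma sarah_state_1:
  "fst (sarah_state n g p eta pr x0 s (Suc 0)) = x0"
  "snd (snd (sarah_state n g p eta pr x0 s (Suc 0))) = full_grad n g x0"
  by (simp_all add: sarah_state_Suc_eq)

lemma sarah_state_prox: "t \<ge> 1 \<Longrightarrow>
  fst (snd (sarah_state n g p eta pr x0 s t)) =
    pr (fst (sarah_state n g p eta pr x0 s t) - eta *\<^sub>R snd (snd (sarah_state n g p eta pr x0 s t)))"
  by (cases t) (simp_all add: sarah_state_Suc_eq del: sarah_state.simps(2))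




context psa begin

definition "Dset = {1..J} \<times> {1..m}"
definition "Om = Pi_pmf Dset {} (\<lambda>_. S)"
definition "es om k = epoch_start n g p \<eta> pr m x1 om k"
definition "stt om j t = sarah_state n g p \<eta> pr (es om (j - 1)) (\<lambda>t'. om (j, t')) t"
definition "xx om j t = fst (stt om j t)"
definition "xn om j t = fst (snd (stt om j t))"
definition "VV om j t = snd (snd (stt om j t))"
definition "ee om j t = fg (xx om j t) - VV om j t"
definition "Dd om j t = norm (fg (xn om j t) - (1/\<eta>) *\<^sub>R (xn om j t - (xx om j t - \<eta> *\<^sub>R VV om j t)))"
definition "Psi om j t = F (xx om j t) - F xstar + ce * real (m + 1 - t) * (norm (ee om j t))\<^sup>2"

lemma finD: "finite Dset" unfolding Dset_def by simp

lemma ce_pos: "ce > 0" unfolding ce_def using eta_pos by simp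

lemma Psi_nonneg: "Psi om j t \<ge> 0"
  unfolding Psi_def using minimum[of "xx om j t"] ce_pos by simp

lemma xx_Suc: "xx om j (Suc t) = xn om j t"
  unfolding xx_def xn_def stt_def by (simp only: sarah_state_Suc_eq fst_conv)

lemma xn_prox: "t \<ge> 1 \<Longrightarrow> xn om j t = pr (xx om j t - \<eta> *\<^sub>R VV om j t)"
  unfolding xn_def xx_def VV_def stt_def by (rule sarah_state_prox)

lemma Psi_1: "Psi om j 1 = F (es om (j - 1)) - F xstar"
  unfolding Psi_def ee_def xx_def VV_def stt_def
  using sarah_state_1[of n g p \<eta> pr "es om (j - 1)" "\<lambda>t'. om (j, t')"] by (simp add: fg_def)

lemma Psi_last: "j \<ge> 1 \<Longrightarrow> Psi om j (Suc m) = F (es om j) - F xstar"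
proof -
  assume j: "j \<ge> 1"
  obtain k where k: "j = Suc k" using j by (cases j) auto
  have "es om j = sarah_next n g p \<eta> pr (es om k) (\<lambda>t. om (Suc k, t)) m"
    unfolding k es_def by simp
  also have "\<dots> = xx om j (Suc m)"
    unfolding sarah_next_Suc xx_def stt_def k by simp
  finally show ?thesis unfolding Psi_def by simp
qed

lemma stt_upd:
  assumes j: "j \<ge> 1"
  shows "stt (om((j, Suc t) := y)) j t = stt om j t"
proof -
  have "es (om((j, Suc t) := y)) (j - 1) = es om (j - 1)"
    unfolding es_def by (rule epoch_start_indep) auto
  moreover have "sarah_state n g p \<eta> pr x0 (\<lambda>t'. (om((j, Suc t) := y)) (j, t')) t
      = sarah_state n g p \<eta> pr x0 (\<lambda>t'. om (j, t')) t" for x0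
    by (rule sarah_state_indep) auto
  ultimately show ?thesis unfolding stt_def by simp
qed

lemma ee_upd:
  assumes j: "j \<ge> 1"
  shows "ee (om((j, Suc t) := y)) j (Suc t) =
    ee om j t + (fg (xn om j t) - fg (xx om j t)) - (\<Sum>i\<in>y. (1 / (real n * p i)) *\<^sub>R (g i (xn om j t) - g i (xx om j t)))"
proof -
  have "stt (om((j, Suc t) := y)) j (Suc t) =
     sarah_state n g p \<eta> pr (es (om((j, Suc t) := y)) (j - 1)) (\<lambda>t'. (om((j, Suc t) := y)) (j, t')) (Suc t)"
    unfolding stt_def ..
  hence "xx (om((j, Suc t) := y)) j (Suc t) = xn om j t \<and>
     VV (om((j, Suc t) := y)) j (Suc t) = (\<Sum>i\<in>y. (1 / (real n * p i)) *\<^sub>R (g i (xn om j t) - g i (xx om j t))) + VV om j t"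
    using stt_upd[OF j, of om t y] unfolding xx_def xn_def VV_def stt_def
    by (simp only: sarah_state_Suc_eq fst_conv snd_conv fun_upd_same)
  thus ?thesis unfolding ee_def by (simp add: algebra_simps)
qed

lemma step_resample:
  assumes j: "j \<in> {1..J}" and t: "t \<ge> 1" "t < m"
  shows "(\<integral>\<^sup>+om. ennreal ((norm (ee om j (Suc t)))\<^sup>2) \<partial>measure_pmf Om)
     \<le> (\<integral>\<^sup>+om. ennreal ((norm (ee om j t))\<^sup>2 + Q * (norm (xn om j t - xx om j t))\<^sup>2) \<partial>measure_pmf Om)"
proof -
  have k: "(j, Suc t) \<in> Dset" using j t unfolding Dset_def by auto
  have j1: "j \<ge> 1" using j by simp
  have "(\<integral>\<^sup>+om. ennreal ((norm (ee om j (Suc t)))\<^sup>2) \<partial>measure_pmf Om)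
      = (\<integral>\<^sup>+om. (\<integral>\<^sup>+y. ennreal ((norm (ee (om((j, Suc t) := y)) j (Suc t)))\<^sup>2) \<partial>measure_pmf S) \<partial>measure_pmf Om)"
    unfolding Om_def by (rule resample[OF finD k])
  also have "\<dots> \<le> (\<integral>\<^sup>+om. ennreal ((norm (ee om j t))\<^sup>2 + Q * (norm (xn om j t - xx om j t))\<^sup>2) \<partial>measure_pmf Om)"
  proof (rule nn_integral_mono)
    fix om
    have "(\<integral>\<^sup>+y. ennreal ((norm (ee (om((j, Suc t) := y)) j (Suc t)))\<^sup>2) \<partial>measure_pmf S)
        = (\<integral>\<^sup>+y. ennreal ((norm (ee om j t + (fg (xn om j t) - fg (xx om j t)) - (\<Sum>i\<in>y. (1 / (real n * p i)) *\<^sub>R (g i (xn om j t) - g i (xx om j t)))))\<^sup>2) \<partial>measure_pmf S)"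
      by (simp only: ee_upd[OF j1])
    also have "\<dots> = ennreal (measure_pmf.expectation S (\<lambda>y. (norm (ee om j t + (fg (xn om j t) - fg (xx om j t)) - (\<Sum>i\<in>y. (1 / (real n * p i)) *\<^sub>R (g i (xn om j t) - g i (xx om j t)))))\<^sup>2))"
      by (rule nn_integral_eq_integral[OF intS]) simp
    also have "\<dots> \<le> ennreal ((norm (ee om j t))\<^sup>2 + Q * (norm (xn om j t - xx om j t))\<^sup>2)"
      by (rule ennreal_leI, rule var_step)
    finally show "(\<integral>\<^sup>+y. ennreal ((norm (ee (om((j, Suc t) := y)) j (Suc t)))\<^sup>2) \<partial>measure_pmf S)
        \<le> ennreal ((norm (ee om j t))\<^sup>2 + Q * (norm (xn om j t - xx om j t))\<^sup>2)" .
  qed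
  finally show ?thesis .
qed

end



context psa begin

lemma main_step:
  assumes j: "j \<in> {1..J}" and t: "t \<ge> 1" "t \<le> m"
  shows "(\<integral>\<^sup>+om. ennreal (Psi om j (Suc t)) \<partial>measure_pmf Om) + (\<integral>\<^sup>+om. ennreal (cc * (Dd om j t)\<^sup>2) \<partial>measure_pmf Om)
     \<le> (\<integral>\<^sup>+om. ennreal (Psi om j t) \<partial>measure_pmf Om)"
proof -
  define cof where "cof = ce * real (m - t)"
  have cof: "cof \<ge> 0" using ce_pos by (simp add: cof_def)
  define A where "A om = F (xn om j t) - F xstar" for om
  have A: "A om \<ge> 0" for om using minimum by (simp add: A_def)
  define E2 where "E2 om = (norm (ee om j t))\<^sup>2 + Q * (norm (xn om j t - xx om j t))\<^sup>2" for om
  have E2: "E2 om \<ge> 0" for om using Q_nonneg by (simp add: E2_def)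
  have PsiS: "Psi om j (Suc t) = A om + cof * (norm (ee om j (Suc t)))\<^sup>2" for om
    unfolding Psi_def A_def cof_def xx_Suc by simp
  have "(\<integral>\<^sup>+om. ennreal (Psi om j (Suc t)) \<partial>measure_pmf Om)
      = (\<integral>\<^sup>+om. ennreal (A om) + ennreal cof * ennreal ((norm (ee om j (Suc t)))\<^sup>2) \<partial>measure_pmf Om)"
    by (intro nn_integral_cong) (simp add: PsiS A cof ennreal_plus ennreal_mult)
  also have "\<dots> = (\<integral>\<^sup>+om. ennreal (A om) \<partial>measure_pmf Om) + ennreal cof * (\<integral>\<^sup>+om. ennreal ((norm (ee om j (Suc t)))\<^sup>2) \<partial>measure_pmf Om)"
    by (simp add: nn_integral_add nn_integral_cmult)
  also have "\<dots> \<le> (\<integral>\<^sup>+om. ennreal (A om) \<partial>measure_pmf Om) + ennreal cof * (\<integral>\<^sup>+om. ennreal (E2 om) \<partial>measure_pmf Om)"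
  proof (cases "t < m")
    case True
    show ?thesis using step_resample[OF j t(1) True] unfolding E2_def
      by (intro add_left_mono mult_left_mono) auto
  next
    case False hence "cof = 0" using t by (simp add: cof_def)
    thus ?thesis by simp
  qed
  also have "\<dots> = (\<integral>\<^sup>+om. ennreal (A om) + ennreal cof * ennreal (E2 om) \<partial>measure_pmf Om)"
    by (simp add: nn_integral_add nn_integral_cmult)
  also have "\<dots> = (\<integral>\<^sup>+om. ennreal (A om + cof * E2 om) \<partial>measure_pmf Om)"
    by (intro nn_integral_cong) (simp add: A E2 cof ennreal_plus ennreal_mult)
  finally have 1: "(\<integral>\<^sup>+om. ennreal (Psi om j (Suc t)) \<partial>measure_pmf Om)
      \<le> (\<integral>\<^sup>+om. ennreal (A om + cof * E2 om) \<partial>measure_pmf Om)" .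
  have pw: "A om + cof * E2 om + cc * (Dd om j t)\<^sup>2 \<le> Psi om j t" for om
  proof -
    define x where "x = xx om j t"
    define V where "V = VV om j t"
    have xn: "xn om j t = pr (x - \<eta> *\<^sub>R V)" unfolding x_def V_def by (rule xn_prox[OF t(1)])
    have det: "cc * (Dd om j t)\<^sup>2 \<le> F x - F (xn om j t) + ce * (norm (ee om j t))\<^sup>2 - cd * (norm (xn om j t - x))\<^sup>2"
      using det_step[of x V] unfolding Dd_def ee_def xn x_def[symmetric] V_def[symmetric] .
    have cq: "cof * Q \<le> cd"
      unfolding cof_def cd_def using ce_pos Q_nonneg t
      by (simp add: mult_left_mono mult_right_mono)
    have cq2: "cof * Q * (norm (xn om j t - xx om j t))\<^sup>2 \<le> cd * (norm (xn om j t - xx om j t))\<^sup>2"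
      using cq by (simp add: mult_right_mono)
    have ms: "real (m + 1 - t) = real (m - t) + 1" using t by simp
    show ?thesis using det cq2 unfolding Psi_def A_def E2_def ms x_def cof_def
      by (simp add: algebra_simps)
  qed
  have "(\<integral>\<^sup>+om. ennreal (A om + cof * E2 om) \<partial>measure_pmf Om) + (\<integral>\<^sup>+om. ennreal (cc * (Dd om j t)\<^sup>2) \<partial>measure_pmf Om)
      = (\<integral>\<^sup>+om. ennreal (A om + cof * E2 om) + ennreal (cc * (Dd om j t)\<^sup>2) \<partial>measure_pmf Om)"
    by (simp add: nn_integral_add)
  also have "\<dots> \<le> (\<integral>\<^sup>+om. ennreal (Psi om j t) \<partial>measure_pmf Om)"
  proof (rule nn_integral_mono)
    fix om
    have "ennreal (A om + cof * E2 om) + ennreal (cc * (Dd om j t)\<^sup>2) = ennreal (A om + cof * E2 om + cc * (Dd om j t)\<^sup>2)"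
      using A E2 cof cc_pos by (simp add: ennreal_plus)
    also have "\<dots> \<le> ennreal (Psi om j t)" using pw by (rule ennreal_leI)
    finally show "ennreal (A om + cof * E2 om) + ennreal (cc * (Dd om j t)\<^sup>2) \<le> ennreal (Psi om j t)" .
  qed
  finally show ?thesis using 1 by (meson add_right_mono order_trans)
qed

end



context psa begin

definition "Bint j t = (\<integral>\<^sup>+om. ennreal (cc * (Dd om j t)\<^sup>2) \<partial>measure_pmf Om)"

lemma epoch_tel:
  assumes j: "j \<in> {1..J}"
  shows "(\<integral>\<^sup>+om. ennreal (F (es om j) - F xstar) \<partial>measure_pmf Om) + (\<Sum>t\<in>{1..m}. Bint j t)
     \<le> (\<integral>\<^sup>+om. ennreal (F (es om (j - 1)) - F xstar) \<partial>measure_pmf Om)"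
proof -
  have gen: "t \<le> m \<Longrightarrow> (\<integral>\<^sup>+om. ennreal (Psi om j (Suc t)) \<partial>measure_pmf Om) + (\<Sum>t'\<in>{1..t}. Bint j t')
      \<le> (\<integral>\<^sup>+om. ennreal (Psi om j 1) \<partial>measure_pmf Om)" for t
  proof (induction t)
    case 0 show ?case by simp
  next
    case (Suc t)
    have "(\<integral>\<^sup>+om. ennreal (Psi om j (Suc (Suc t))) \<partial>measure_pmf Om) + (\<Sum>t'\<in>{1..Suc t}. Bint j t')
        = ((\<integral>\<^sup>+om. ennreal (Psi om j (Suc (Suc t))) \<partial>measure_pmf Om) + Bint j (Suc t)) + (\<Sum>t'\<in>{1..t}. Bint j t')"
      by (simp add: sum.cl_ivl_Suc add_ac)
    also have "\<dots> \<le> (\<integral>\<^sup>+om. ennreal (Psi om j (Suc t)) \<partial>measure_pmf Om) + (\<Sum>t'\<in>{1..t}. Bint j t')"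
      using main_step[OF j, of "Suc t"] Suc.prems unfolding Bint_def by (intro add_right_mono) auto
    also have "\<dots> \<le> (\<integral>\<^sup>+om. ennreal (Psi om j 1) \<partial>measure_pmf Om)"
      using Suc by simp
    finally show ?case .
  qed
  have j1: "j \<ge> 1" using j by simp
  show ?thesis using gen[of m] unfolding Psi_1 Psi_last[OF j1] by simp
qed

lemma global_bound: "(\<Sum>j\<in>{1..J}. \<Sum>t\<in>{1..m}. Bint j t) \<le> ennreal \<Delta>"
proof -
  have gen: "J' \<le> J \<Longrightarrow> (\<integral>\<^sup>+om. ennreal (F (es om J') - F xstar) \<partial>measure_pmf Om) + (\<Sum>j\<in>{1..J'}. \<Sum>t\<in>{1..m}. Bint j t)
      \<le> ennreal \<Delta>" for J'
  proof (induction J')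
    case 0
    show ?case by (simp add: es_def Delta_def measure_pmf.emeasure_space_1)
  next
    case (Suc J')
    have "(\<integral>\<^sup>+om. ennreal (F (es om (Suc J')) - F xstar) \<partial>measure_pmf Om) + (\<Sum>j\<in>{1..Suc J'}. \<Sum>t\<in>{1..m}. Bint j t)
        = ((\<integral>\<^sup>+om. ennreal (F (es om (Suc J')) - F xstar) \<partial>measure_pmf Om) + (\<Sum>t\<in>{1..m}. Bint (Suc J') t))
           + (\<Sum>j\<in>{1..J'}. \<Sum>t\<in>{1..m}. Bint j t)"
      by (simp add: sum.cl_ivl_Suc add_ac)
    also have "\<dots> \<le> (\<integral>\<^sup>+om. ennreal (F (es om J') - F xstar) \<partial>measure_pmf Om) + (\<Sum>j\<in>{1..J'}. \<Sum>t\<in>{1..m}. Bint j t)"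
      using epoch_tel[of "Suc J'"] Suc.prems by (intro add_right_mono) auto
    also have "\<dots> \<le> ennreal \<Delta>" using Suc by simp
    finally show ?case .
  qed
  from gen[of J] show ?thesis by (meson add_increasing order_trans zero_le order_refl)
qed

end



context psa begin

lemma finOm: "finite (set_pmf Om)"
  unfolding Om_def using finD finS by (subst set_Pi_pmf[OF finD]) (auto intro!: finite_PiE_dflt)

definition "Breal j t = measure_pmf.expectation Om (\<lambda>om. cc * (Dd om j t)\<^sup>2)"

lemma Breal_nonneg: "Breal j t \<ge> 0"
  unfolding Breal_def using cc_pos by (intro Bochner_Integration.integral_nonneg) simp

lemma Bint_eq: "Bint j t = ennreal (Breal j t)"
  unfolding Bint_def Breal_def
  by (rule nn_integral_eq_integral[OF integrable_measure_pmf_finite[OF finOm]]) (use cc_pos in simp)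

lemma sumB: "(\<Sum>jt\<in>Dset. Breal (fst jt) (snd jt)) \<le> \<Delta>"
proof -
  have "(\<Sum>jt\<in>Dset. Breal (fst jt) (snd jt)) = (\<Sum>j\<in>{1..J}. \<Sum>t\<in>{1..m}. Breal j t)"
    unfolding Dset_def by (simp add: sum.cartesian_product case_prod_beta)
  moreover have "ennreal (\<Sum>j\<in>{1..J}. \<Sum>t\<in>{1..m}. Breal j t) \<le> ennreal \<Delta>"
    using global_bound unfolding Bint_eq by (simp add: Breal_nonneg sum_nonneg)
  moreover have "\<Delta> \<ge> 0" using minimum[of x1] by (simp add: Delta_def)
  ultimately show ?thesis by simp
qed

lemma Dset_ne: "Dset \<noteq> {}" unfolding Dset_def using J_pos m_pos by auto

lemma card_Dset: "card Dset = J * m" unfolding Dset_def by simp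

lemma iter_eq: "proxsarah_iter n g p \<eta> pr m x1 om j t = xn om j t"
  unfolding proxsarah_iter_def sarah_next_def xn_def stt_def es_def ..

lemma J_rel: "\<Delta> / (cc * real J * real m) = \<epsilon>\<^sup>2"
proof -
  have "real J = \<Delta> / (cc * real m * \<epsilon>\<^sup>2)"
    unfolding J_def cc_def K_def using m_pos eps_pos by (simp add: field_simps)
  thus ?thesis using m_pos eps_pos cc_pos J_pos by (simp add: field_simps)
qed

lemma final_bound:
  "(\<integral>\<^sup>+ (\<omega>, (j, t)). dist0 (frechet_subdiff F (proxsarah_iter n g p \<eta> pr m x1 \<omega> j t))
            \<partial>measure_pmf (pair_pmf (Pi_pmf ({1..J} \<times> {1..m}) {} (\<lambda>_. S))
                                    (pmf_of_set ({1..J} \<times> {1..m}))))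
         \<le> ennreal \<epsilon>"
proof -
  define a where "a = 1 / (2 * \<epsilon> * cc)"
  have a: "a > 0" unfolding a_def using eps_pos cc_pos by simp
  define h where "h om jt = a * (cc * (Dd om (fst jt) (snd jt))\<^sup>2) + \<epsilon> / 2" for om jt
  have hnn: "h om jt \<ge> 0" for om jt unfolding h_def using a cc_pos eps_pos by simp
  have U: "set_pmf (pmf_of_set Dset) = Dset" using Dset_ne finD by simp
  have "(\<integral>\<^sup>+ (\<omega>, (j, t)). dist0 (frechet_subdiff F (proxsarah_iter n g p \<eta> pr m x1 \<omega> j t))
            \<partial>measure_pmf (pair_pmf Om (pmf_of_set Dset)))
      \<le> (\<integral>\<^sup>+ x. ennreal (h (fst x) (snd x)) \<partial>measure_pmf (pair_pmf Om (pmf_of_set Dset)))"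
  proof (rule nn_integral_mono_AE, unfold AE_measure_pmf_iff, intro ballI)
    fix x assume "x \<in> set_pmf (pair_pmf Om (pmf_of_set Dset))"
    then obtain om j t where x: "x = (om, (j, t))" and jt: "(j, t) \<in> Dset" using U by auto
    have t1: "t \<ge> 1" using jt unfolding Dset_def by auto
    have "dist0 (frechet_subdiff F (proxsarah_iter n g p \<eta> pr m x1 om j t)) \<le> ennreal (Dd om j t)"
      unfolding iter_eq Dd_def xn_prox[OF t1] by (rule dist_step)
    also have "\<dots> \<le> ennreal (h om (j, t))"
    proof (rule ennreal_leI)
      have "0 \<le> (Dd om j t - \<epsilon>)\<^sup>2 / (2 * \<epsilon>)" using eps_pos by simp
      moreover have "(Dd om j t - \<epsilon>)\<^sup>2 / (2 * \<epsilon>) = h om (j, t) - Dd om j t"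
        unfolding h_def a_def using eps_pos cc_pos by (simp add: field_simps power2_eq_square)
      ultimately show "Dd om j t \<le> h om (j, t)" by simp
    qed
    finally show "(case x of (\<omega>, j, t) \<Rightarrow> dist0 (frechet_subdiff F (proxsarah_iter n g p \<eta> pr m x1 \<omega> j t)))
        \<le> ennreal (h (fst x) (snd x))" unfolding x by simp
  qed
  also have "\<dots> = (\<integral>\<^sup>+ jt. \<integral>\<^sup>+ om. ennreal (h om jt) \<partial>measure_pmf Om \<partial>measure_pmf (pmf_of_set Dset))"
    by (subst pair_commute_pmf) (simp add: nn_integral_pair_pmf' case_prod_beta)
  also have "\<dots> = (\<integral>\<^sup>+ jt. ennreal (a * Breal (fst jt) (snd jt) + \<epsilon> / 2) \<partial>measure_pmf (pmf_of_set Dset))"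
  proof (rule nn_integral_cong)
    fix jt
    have "(\<integral>\<^sup>+ om. ennreal (h om jt) \<partial>measure_pmf Om) = ennreal (measure_pmf.expectation Om (\<lambda>om. h om jt))"
      by (rule nn_integral_eq_integral[OF integrable_measure_pmf_finite[OF finOm]]) (simp add: hnn)
    also have "measure_pmf.expectation Om (\<lambda>om. h om jt) = a * Breal (fst jt) (snd jt) + \<epsilon> / 2"
      unfolding h_def Breal_def
      by (subst Bochner_Integration.integral_add) (auto intro: integrable_measure_pmf_finite[OF finOm])
    finally show "(\<integral>\<^sup>+ om. ennreal (h om jt) \<partial>measure_pmf Om) = ennreal (a * Breal (fst jt) (snd jt) + \<epsilon> / 2)" .
  qed
  also have "\<dots> = ennreal (measure_pmf.expectation (pmf_of_set Dset) (\<lambda>jt. a * Breal (fst jt) (snd jt) + \<epsilon> / 2))"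
    by (rule nn_integral_eq_integral) (auto intro!: integrable_measure_pmf_finite simp: U finD a Breal_nonneg eps_pos less_imp_le)
  also have "measure_pmf.expectation (pmf_of_set Dset) (\<lambda>jt. a * Breal (fst jt) (snd jt) + \<epsilon> / 2)
      = (\<Sum>jt\<in>Dset. a * Breal (fst jt) (snd jt) + \<epsilon> / 2) / real (J * m)"
    using integral_pmf_of_set[OF Dset_ne finD] card_Dset by simp
  also have "\<dots> \<le> \<epsilon>"
  proof -
    have "(\<Sum>jt\<in>Dset. a * Breal (fst jt) (snd jt) + \<epsilon> / 2) = a * (\<Sum>jt\<in>Dset. Breal (fst jt) (snd jt)) + real (J * m) * (\<epsilon> / 2)"
      by (simp add: sum.distrib sum_distrib_left card_Dset)
    also have "\<dots> \<le> a * \<Delta> + real (J * m) * (\<epsilon> / 2)"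
      using sumB a by simp
    finally have 1: "(\<Sum>jt\<in>Dset. a * Breal (fst jt) (snd jt) + \<epsilon> / 2) \<le> a * \<Delta> + real (J * m) * (\<epsilon> / 2)" .
    have pos: "real (J * m) > 0" using J_pos m_pos by simp
    have "(a * \<Delta> + real (J * m) * (\<epsilon> / 2)) / real (J * m) = \<epsilon>"
    proof -
      have "a * \<Delta> / real (J * m) = (\<Delta> / (cc * real J * real m)) / (2 * \<epsilon>)"
        unfolding a_def using eps_pos cc_pos pos by (simp add: field_simps)
      also have "\<dots> = \<epsilon> / 2" unfolding J_rel using eps_pos by (simp add: power2_eq_square)
      finally have q: "a * \<Delta> / real (J * m) = \<epsilon> / 2" .
      have "(a * \<Delta> + real (J * m) * (\<epsilon> / 2)) / real (J * m) = a * \<Delta> / real (J * m) + \<epsilon> / 2"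
        using pos by (simp only: add_divide_distrib) (use J_pos m_pos in simp)
      thus ?thesis using q by simp
    qed
    thus ?thesis using 1 pos by (metis divide_right_mono less_imp_le)
  qed
  finally show ?thesis unfolding Om_def Dset_def by (simp add: ennreal_leI)
qed

end

theorem theorem5p5:
  fixes n m J :: nat
    and f :: "nat \<Rightarrow> 'a::euclidean_space \<Rightarrow> real"
    and g :: "nat \<Rightarrow> 'a \<Rightarrow> 'a"
    and G L v :: "nat \<Rightarrow> real"
    and r :: "'a \<Rightarrow> real"
    and S :: "nat set pmf"
    and pr :: "'a \<Rightarrow> 'a"
    and xstar x1 :: 'a
    and \<epsilon> :: real
    and F :: "'a \<Rightarrow> real" and p :: "nat \<Rightarrow> real" and P :: "nat \<Rightarrow> nat \<Rightarrow> real"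
    and b Lt Q \<eta> \<Delta> :: real
  assumes F_def: "F = (\<lambda>x. (1 / real n) * (\<Sum>i<n. f i x) + r x)"
    and p_def: "p = (\<lambda>i. measure_pmf.prob S {A. i \<in> A})"
    and P_def: "P = (\<lambda>i j. measure_pmf.prob S {A. i \<in> A \<and> j \<in> A})"
    and b_def: "b = measure_pmf.expectation S (\<lambda>A. real (card A))"
    and Lt_def: "Lt = (1 / real n) * (\<Sum>i<n. L i)"
    and Q_def: "Q = (\<Sum>i<n. v i * (L i)\<^sup>2 / (p i * (real n)\<^sup>2))"
    and eta_def: "\<eta> = 1 / (4 * Lt + 2 * real m * Q / Lt)"
    and Delta_def: "\<Delta> = F x1 - F xstar"
    and n_pos: "n \<ge> 1"
    and grad: "\<And>i x. i < n \<Longrightarrow> GDERIV (f i) x :> g i x"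
    and grad_bdd: "\<And>i x. i < n \<Longrightarrow> norm (g i x) \<le> G i"
    and grad_lip: "\<And>i x y. i < n \<Longrightarrow> norm (g i x - g i y) \<le> L i * norm (x - y)"
    and Lt_pos: "Lt > 0"
    and minimum: "\<And>x. F xstar \<le> F x"
    and prox_exists: "\<And>y. \<exists>x. is_prox \<eta> r y x"
    and prox_sel: "\<And>y. is_prox \<eta> r y (pr y)"
    and sampling_subset: "set_pmf S \<subseteq> Pow {..<n}"
    and proper: "\<And>i. i < n \<Longrightarrow> p i > 0"
    and ESO: "\<And>h :: nat \<Rightarrow> real.
       (\<Sum>i<n. \<Sum>j<n. (P i j - p i * p j) * h i * h j) \<le> (\<Sum>i<n. p i * v i * (h i)\<^sup>2)"
    and m_pos: "m \<ge> 1"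
    and eps_pos: "\<epsilon> > 0"
    and J_pos: "J \<ge> 1"
    and J_def: "real J = 1 / (real m * \<epsilon>\<^sup>2) * (24 * Lt + 4 * real m * Q / Lt) * \<Delta>"
  shows "(\<integral>\<^sup>+ (\<omega>, (j, t)). dist0 (frechet_subdiff F (proxsarah_iter n g p \<eta> pr m x1 \<omega> j t))
            \<partial>measure_pmf (pair_pmf (Pi_pmf ({1..J} \<times> {1..m}) {} (\<lambda>_. S))
                                    (pmf_of_set ({1..J} \<times> {1..m}))))
         \<le> ennreal \<epsilon>
       \<and> ifo_total n m b J
           = (real n + real m * b) / (real m * \<epsilon>\<^sup>2) * (24 * Lt + 4 * real m * Q / Lt) * \<Delta>"
proof -
  interpret psa n m J f g G L v r S pr xstar x1 \<epsilon> F p P b Lt Q \<eta> \<Delta>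
    by (rule psa.intro) (fact assms)+
  have ifo: "ifo_total n m b J
           = (real n + real m * b) / (real m * \<epsilon>\<^sup>2) * (24 * Lt + 4 * real m * Q / Lt) * \<Delta>"
  proof -
    have "ifo_total n m b J = real J * (real n + real m * b)"
      by (simp add: ifo_total_def algebra_simps)
    also have "\<dots> = (real n + real m * b) / (real m * \<epsilon>\<^sup>2) * (24 * Lt + 4 * real m * Q / Lt) * \<Delta>"
      unfolding J_def by (simp add: field_simps)
    finally show ?thesis .
  qed
  show ?thesis using final_bound ifo by simp
qed

end
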